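(* Let $H$ be a graph with $h$ vertices and $m$ edges. Let $G'$ be a $k$-partite $(\epsilon,p)$-graph with vertex classes $(U_1,\dots,U_k)$, $|U_i|=n$ for all $i$, and let $G$ be a graph on $V(G')$ such that for every $i\ne j$ with $d_{G'}(U_i,U_j)>0$, the bipartite graph $G[U_i,U_j]$ is $\delta$-close to $G'[U_i,U_j]$. Suppose $\delta\le 1/(2m)$, $\epsilon\le (p^{m+1}/(32h^4))^2$ and $n\ge 4h^{h+3}/p^m$. If $G'$ contains a copy of $H$, then the number of copies of $H$ in $G$ is at least $$\frac{1-\delta m}{2}\cdot p^m n^h .$$
   Context: $d_G(A,B)=e_G(A,B)/(|A||B|)$ where $e_G(A,B)$ counts pairs $(u,v)\in A\times B$ with $uv\in E(G)$. A pair $(A,B)$ is $\epsilon$-regular if $|d(A,B)-d(A',B')|\le\epsilon$ for all $A'\subseteq A$, $B'\subseteq B$ with $|A'|\ge\epsilon|A|$, $|B'|\ge\epsilon|B|$. A graph is an $(\epsilon,p)$-graph if it is multipartite and the bipartite graph between any pair of its classes is either empty or $\epsilon$-regular of density at least $p$. $G[U_i,U_j]$ is the bipartite subgraph of $G$ consisting of the edges between $U_i$ and $U_j$. A graph $F_1$ on vertex set $W$ is $\delta$-close to a graph $F_2=(W,E_2)$ if $|E(F_1)\triangle E_2|\le\delta|E_2|$. *)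

theory Defs
  imports Complex_Main "HOL-Library.FuncSet"
begin

definition graph :: "'a set \<Rightarrow> 'a set set \<Rightarrow> bool" where
  "graph V E \<longleftrightarrow> finite V \<and> (\<forall>e\<in>E. e \<subseteq> V \<and> card e = 2)"

definition edge_count :: "'a set set \<Rightarrow> 'a set \<Rightarrow> 'a set \<Rightarrow> nat" where
  "edge_count E A B = card {(u, v). u \<in> A \<and> v \<in> B \<and> {u, v} \<in> E}"

definition density :: "'a set set \<Rightarrow> 'a set \<Rightarrow> 'a set \<Rightarrow> real" where
  "density E A B = real (edge_count E A B) / (real (card A) * real (card B))"

definition eps_regular :: "'a set set \<Rightarrow> real \<Rightarrow> 'a set \<Rightarrow> 'a set \<Rightarrow> bool" where
  "eps_regular E \<epsilon> A B \<longleftrightarrow>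
     (\<forall>A' B'. A' \<subseteq> A \<and> B' \<subseteq> B \<and> real (card A') \<ge> \<epsilon> * real (card A)
        \<and> real (card B') \<ge> \<epsilon> * real (card B)
        \<longrightarrow> \<bar>density E A B - density E A' B'\<bar> \<le> \<epsilon>)"

definition bip_edges :: "'a set set \<Rightarrow> 'a set \<Rightarrow> 'a set \<Rightarrow> 'a set set" where
  "bip_edges E A B = {e \<in> E. \<exists>u v. u \<in> A \<and> v \<in> B \<and> e = {u, v}}"

definition delta_close :: "real \<Rightarrow> 'a set set \<Rightarrow> 'a set set \<Rightarrow> bool" where
  "delta_close \<delta> E1 E2 \<longleftrightarrow> real (card ((E1 - E2) \<union> (E2 - E1))) \<le> \<delta> * real (card E2)"

definition k_partite :: "nat \<Rightarrow> (nat \<Rightarrow> 'a set) \<Rightarrow> 'a set \<Rightarrow> 'a set set \<Rightarrow> bool" where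
  "k_partite k U V E \<longleftrightarrow> graph V E \<and> V = (\<Union>i<k. U i)
     \<and> (\<forall>i<k. \<forall>j<k. i \<noteq> j \<longrightarrow> U i \<inter> U j = {})
     \<and> (\<forall>e\<in>E. \<forall>i<k. \<not> e \<subseteq> U i)"

definition eps_p_graph :: "real \<Rightarrow> real \<Rightarrow> nat \<Rightarrow> (nat \<Rightarrow> 'a set) \<Rightarrow> 'a set \<Rightarrow> 'a set set \<Rightarrow> bool" where
  "eps_p_graph \<epsilon> p k U V E \<longleftrightarrow> k_partite k U V E \<and>
     (\<forall>i<k. \<forall>j<k. i \<noteq> j \<longrightarrow>
        bip_edges E (U i) (U j) = {} \<or>
        (eps_regular E \<epsilon> (U i) (U j) \<and> density E (U i) (U j) \<ge> p))"

text \<open>Labelled copies of H = (VH,EH) in G = (V,E): injective maps V(H) -> V(G) sending edges to edges.\<close>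
definition copies :: "'b set \<Rightarrow> 'b set set \<Rightarrow> 'a set \<Rightarrow> 'a set set \<Rightarrow> ('b \<Rightarrow> 'a) set" where
  "copies VH EH V E = {f \<in> VH \<rightarrow>\<^sub>E V. inj_on f VH \<and> (\<forall>e\<in>EH. f ` e \<in> E)}"

end

theory Submission
  imports Defs
begin


lemma sum_PiE_insert:
  fixes F :: "('b \<Rightarrow> 'a) \<Rightarrow> real"
  assumes "x \<notin> X"
  shows "(\<Sum>f\<in>PiE (insert x X) C. F f) = (\<Sum>g\<in>PiE X C. \<Sum>a\<in>C x. F (g(x:=a)))"
proof -
  have "(\<Sum>f\<in>PiE (insert x X) C. F f) = (\<Sum>z\<in>C x \<times> PiE X C. F ((\<lambda>(y, g). g(x := y)) z))"
    unfolding PiE_insert_eq by (subst sum.reindex[OF inj_combinator[OF assms]]) (simp add: case_prod_unfold)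
  also have "\<dots> = (\<Sum>a\<in>C x. \<Sum>g\<in>PiE X C. F (g(x:=a)))"
    by (simp add: sum.cartesian_product split_def)
  also have "\<dots> = (\<Sum>g\<in>PiE X C. \<Sum>a\<in>C x. F (g(x:=a)))"
    by (rule sum.swap)
  finally show ?thesis .
qed

lemma sum_PiE_two:
  fixes F :: "('b \<Rightarrow> 'a) \<Rightarrow> real"
  assumes "x \<in> VH" "y \<in> VH" "x \<noteq> y"
  shows "(\<Sum>f\<in>PiE VH C. F f) = (\<Sum>g\<in>PiE (VH - {x,y}) C. \<Sum>a\<in>C x. \<Sum>b\<in>C y. F (g(y:=b, x:=a)))"
proof -
  have VH: "VH = insert x (insert y (VH - {x,y}))" using assms by auto
  have "(\<Sum>f\<in>PiE VH C. F f) = (\<Sum>g\<in>PiE (insert y (VH - {x,y})) C. \<Sum>a\<in>C x. F (g(x:=a)))"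
    by (subst VH, rule sum_PiE_insert) (use assms in auto)
  also have "\<dots> = (\<Sum>g\<in>PiE (VH - {x,y}) C. \<Sum>b\<in>C y. \<Sum>a\<in>C x. F (g(y:=b, x:=a)))"
    by (rule sum_PiE_insert) auto
  also have "\<dots> = (\<Sum>g\<in>PiE (VH - {x,y}) C. \<Sum>a\<in>C x. \<Sum>b\<in>C y. F (g(y:=b, x:=a)))"
    by (rule sum.cong[OF refl], rule sum.swap)
  finally show ?thesis .
qed

lemma sum_ind:
  assumes "finite A" "finite B" "A' \<subseteq> A" "B' \<subseteq> B"
  shows "(\<Sum>a\<in>A. \<Sum>b\<in>B. if a\<in>A' \<and> b\<in>B' \<and> P a b then 1 else 0::real)
       = real (card {(a,b). a\<in>A' \<and> b\<in>B' \<and> P a b})"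
proof -
  have "(\<Sum>a\<in>A. \<Sum>b\<in>B. if a\<in>A' \<and> b\<in>B' \<and> P a b then 1 else 0::real)
      = (\<Sum>z\<in>A\<times>B. if z \<in> {(a,b). a\<in>A' \<and> b\<in>B' \<and> P a b} then 1 else 0)"
    by (simp add: sum.cartesian_product case_prod_unfold)
  also have "\<dots> = real (card ({(a,b). a\<in>A' \<and> b\<in>B' \<and> P a b} \<inter> (A\<times>B)))"
    by (simp add: sum.If_cases[OF finite_cartesian_product[OF assms(1,2)]] Int_commute)
  also have "{(a,b). a\<in>A' \<and> b\<in>B' \<and> P a b} \<inter> (A\<times>B) = {(a,b). a\<in>A' \<and> b\<in>B' \<and> P a b}"
    using assms by auto
  finally show ?thesis .
qed


lemma edge_count_le:
  assumes "finite A" "finite B"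
  shows "edge_count E A B \<le> card A * card B"
proof -
  have "{(u, v). u \<in> A \<and> v \<in> B \<and> {u, v} \<in> E} \<subseteq> A \<times> B" by auto
  then have "edge_count E A B \<le> card (A \<times> B)"
    unfolding edge_count_def using assms by (intro card_mono) auto
  then show ?thesis by (simp add: card_cartesian_product)
qed

lemma density_bounds:
  assumes "finite A" "finite B"
  shows "0 \<le> density E A B" "density E A B \<le> 1"
proof -
  show "0 \<le> density E A B" unfolding density_def by simp
  have "real (edge_count E A B) \<le> real (card A) * real (card B)"
    using edge_count_le[OF assms, of E] by (metis of_nat_le_iff of_nat_mult)
  then show "density E A B \<le> 1" unfolding density_def
    by (cases "real (card A) * real (card B) = 0") (auto simp: divide_le_eq_1)
qed

lemma reg_bound:
  assumes reg: "eps_regular E \<epsilon> A B" and fin: "finite A" "finite B"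
    and cA: "card A = n" and cB: "card B = n" and eps: "0 < \<epsilon>"
    and sub: "A' \<subseteq> A" "B' \<subseteq> B"
  shows "\<bar>real (edge_count E A' B') - density E A B * real (card A') * real (card B')\<bar> \<le> \<epsilon> * real n ^ 2"
proof -
  have finA': "finite A'" "finite B'" using fin sub finite_subset by auto
  have a'n: "card A' \<le> n" "card B' \<le> n" using card_mono[OF fin(1) sub(1)] card_mono[OF fin(2) sub(2)] cA cB by auto
  have ec: "real (edge_count E A' B') \<le> real (card A') * real (card B')"
    using edge_count_le[OF finA', of E] by (metis of_nat_le_iff of_nat_mult)
  have d0: "0 \<le> density E A B" and d1: "density E A B \<le> 1" using density_bounds[OF fin] by auto
  show ?thesis
  proof (cases "real (card A') < \<epsilon> * real n \<or> real (card B') < \<epsilon> * real n")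
    case True
    have prod_le: "real (card A') * real (card B') \<le> \<epsilon> * real n ^ 2"
    proof (cases "real (card A') < \<epsilon> * real n")
      case True
      have "real (card A') * real (card B') \<le> (\<epsilon> * real n) * real n"
        using True a'n by (intro mult_mono) auto
      then show ?thesis by (simp add: power2_eq_square)
    next
      case False
      then have "real (card B') < \<epsilon> * real n" using \<open>real (card A') < \<epsilon> * real n \<or> real (card B') < \<epsilon> * real n\<close> by auto
      have "real (card A') * real (card B') \<le> real n * (\<epsilon> * real n)"
        using \<open>real (card B') < \<epsilon> * real n\<close> a'n by (intro mult_mono) auto
      then show ?thesis by (simp add: power2_eq_square mult.left_commute)
    qed
    have "0 \<le> density E A B * real (card A') * real (card B')" using d0 by simp
    moreover have "density E A B * real (card A') * real (card B') \<le> real (card A') * real (card B')"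
      using d1 d0 mult_left_le_one_le[of "real (card A') * real (card B')" "density E A B"] by (simp add: mult.assoc)
    ultimately show ?thesis using ec prod_le by auto
  next
    case False
    then have ge: "\<epsilon> * real (card A) \<le> real (card A')" "\<epsilon> * real (card B) \<le> real (card B')" using cA cB by auto
    show ?thesis
    proof (cases "n = 0")
      case True
      then have "A' = {}" "B' = {}" using a'n finA' by auto
      then show ?thesis using eps by (simp add: edge_count_def)
    next
      case nz: False
    have pos: "real (card A') > 0" "real (card B') > 0"
    proof -
      have "\<epsilon> * real n > 0" using eps nz by simp
      then show "real (card A') > 0" "real (card B') > 0" using ge cA cB by auto
    qed
    have "\<bar>density E A B - density E A' B'\<bar> \<le> \<epsilon>"
      using reg sub ge unfolding eps_regular_def by blast
    moreover have "real (edge_count E A' B') = density E A' B' * real (card A') * real (card B')"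
      unfolding density_def using pos by simp
    ultimately have "\<bar>real (edge_count E A' B') - density E A B * real (card A') * real (card B')\<bar>
        = \<bar>density E A B - density E A' B'\<bar> * (real (card A') * real (card B'))"
    proof -
      have "real (edge_count E A' B') - density E A B * real (card A') * real (card B')
          = (density E A' B' - density E A B) * (real (card A') * real (card B'))"
        using \<open>real (edge_count E A' B') = _\<close> by (simp add: algebra_simps)
      then show ?thesis using pos by (simp add: abs_mult abs_minus_commute)
    qed
    also have "\<dots> \<le> \<epsilon> * (real n * real n)"
      using \<open>\<bar>density E A B - density E A' B'\<bar> \<le> \<epsilon>\<close> a'n pos
      by (intro mult_mono) (auto intro!: mult_mono)
    finally show ?thesis by (simp add: power2_eq_square)
  qed
  qed
qed


definition NN :: "'b set \<Rightarrow> ('b \<Rightarrow> 'a set) \<Rightarrow> 'b set set \<Rightarrow> ('b set \<Rightarrow> 'a set set) \<Rightarrow> real" where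
  "NN VH C T S = (\<Sum>f\<in>PiE VH C. if (\<forall>e\<in>T. f ` e \<in> S e) then 1 else 0)"

lemma upd_image_notin: "z \<notin> e \<Longrightarrow> (f(z:=v)) ` e = f ` e"
  by (auto intro: image_cong)

lemma card2_not_both:
  assumes "card e = 2" "e \<noteq> {x,y}" "x \<noteq> y" "x \<in> e" "y \<in> e"
  shows False
proof -
  have "finite e" using assms(1) by (metis card.infinite zero_neq_numeral)
  have "{x,y} \<subseteq> e" using assms by auto
  moreover have "card {x,y} = card e" using assms by simp
  ultimately have "{x,y} = e" using card_subset_eq[OF \<open>finite e\<close>] by blast
  then show False using assms by simp
qed

lemma key:
  assumes xy: "x \<in> VH" "y \<in> VH" "x \<noteq> y" and fin: "finite (C x)" "finite (C y)"
    and T: "\<forall>e\<in>T. card e = 2 \<and> e \<noteq> {x,y}" and SE: "S {x,y} = E'"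
    and reg: "\<forall>A'\<subseteq>C x. \<forall>B'\<subseteq>C y. \<bar>real (edge_count E' A' B') - d * real (card A') * real (card B')\<bar> \<le> \<eta>"
  shows "\<bar>NN VH C (insert {x,y} T) S - d * NN VH C T S\<bar> \<le> real (card (PiE (VH-{x,y}) C)) * \<eta>"
proof -
  let ?R = "PiE (VH-{x,y}) C"
  define I1 where "I1 g = (\<Sum>a\<in>C x. \<Sum>b\<in>C y. if (\<forall>e\<in>insert {x,y} T. (g(y:=b, x:=a)) ` e \<in> S e) then 1 else 0::real)" for g
  define I2 where "I2 g = (\<Sum>a\<in>C x. \<Sum>b\<in>C y. if (\<forall>e\<in>T. (g(y:=b, x:=a)) ` e \<in> S e) then 1 else 0::real)" for g
  have N1: "NN VH C (insert {x,y} T) S = (\<Sum>g\<in>?R. I1 g)"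
    unfolding NN_def I1_def by (rule sum_PiE_two[OF xy])
  have N2: "NN VH C T S = (\<Sum>g\<in>?R. I2 g)"
    unfolding NN_def I2_def by (rule sum_PiE_two[OF xy])
  have pt: "\<bar>I1 g - d * I2 g\<bar> \<le> \<eta>" for g
  proof -
    define A' where "A' = {a\<in>C x. \<forall>e\<in>T. x \<in> e \<longrightarrow> (g(x:=a)) ` e \<in> S e}"
    define B' where "B' = {b\<in>C y. \<forall>e\<in>T. y \<in> e \<longrightarrow> (g(y:=b)) ` e \<in> S e}"
    define Q where "Q = (\<forall>e\<in>T. x \<notin> e \<longrightarrow> y \<notin> e \<longrightarrow> g ` e \<in> S e)"
    have eqT: "(\<forall>e\<in>T. (g(y:=b, x:=a)) ` e \<in> S e) \<longleftrightarrow> Q \<and> a \<in> A' \<and> b \<in> B'"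
      if "a \<in> C x" "b \<in> C y" for a b
    proof -
      have nb: "\<not> (x \<in> e \<and> y \<in> e)" if "e \<in> T" for e
        using card2_not_both[of e x y] T that xy(3) by blast
      have img: "(g(y:=b, x:=a)) ` e = (if x \<in> e then (g(x:=a)) ` e else if y \<in> e then (g(y:=b)) ` e else g ` e)"
        if "e \<in> T" for e
      proof (cases "x \<in> e")
        case True
        then have "y \<notin> e" using nb[OF that] by blast
        have "g(y:=b, x:=a) = g(x:=a, y:=b)" using xy(3) by (auto simp: fun_eq_iff)
        then have "(g(y:=b, x:=a)) ` e = (g(x:=a, y:=b)) ` e" by simp
        also have "\<dots> = (g(x:=a)) ` e" by (rule upd_image_notin[OF \<open>y \<notin> e\<close>])
        finally show ?thesis using True by simp
      next
        case False
        then have "(g(y:=b, x:=a)) ` e = (g(y:=b)) ` e" by (rule upd_image_notin)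
        moreover have "y \<notin> e \<Longrightarrow> (g(y:=b)) ` e = g ` e" by (rule upd_image_notin)
        ultimately show ?thesis using False by simp
      qed
      have "(\<forall>e\<in>T. (g(y:=b, x:=a)) ` e \<in> S e) \<longleftrightarrow>
            (\<forall>e\<in>T. (if x \<in> e then (g(x:=a)) ` e else if y \<in> e then (g(y:=b)) ` e else g ` e) \<in> S e)"
        using img by (intro ball_cong refl) presburger
      also have "\<dots> \<longleftrightarrow> Q \<and> a \<in> A' \<and> b \<in> B'"
        unfolding A'_def B'_def Q_def mem_Collect_eq using that nb by (fastforce split: if_splits)
      finally show ?thesis .
    qed
    have A'sub: "A' \<subseteq> C x" and B'sub: "B' \<subseteq> C y" unfolding A'_def B'_def by auto
    have xyimg: "(g(y:=b, x:=a)) ` {x,y} = {a,b}" for a b using xy(3) by auto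
    have I2eq: "I2 g = (if Q then real (card A') * real (card B') else 0)"
    proof -
      have "I2 g = (\<Sum>a\<in>C x. \<Sum>b\<in>C y. if a \<in> A' \<and> b \<in> B' \<and> Q then 1 else 0::real)"
        unfolding I2_def by (intro sum.cong refl) (simp only: eqT conj_ac)
      also have "\<dots> = real (card {(a,b). a \<in> A' \<and> b \<in> B' \<and> Q})"
        by (rule sum_ind[OF fin A'sub B'sub])
      also have "\<dots> = (if Q then real (card A') * real (card B') else 0)"
      proof (cases Q)
        case True
        then have "{(a,b). a \<in> A' \<and> b \<in> B' \<and> Q} = A' \<times> B'" by auto
        then show ?thesis using True by (simp add: card_cartesian_product)
      qed simp
      finally show ?thesis .
    qed
    have I1eq: "I1 g = (if Q then real (edge_count E' A' B') else 0)"
    proof -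
      have "I1 g = (\<Sum>a\<in>C x. \<Sum>b\<in>C y. if a \<in> A' \<and> b \<in> B' \<and> (Q \<and> {a,b} \<in> E') then 1 else 0::real)"
        unfolding I1_def by (intro sum.cong refl) (simp only: ball_simps eqT xyimg SE conj_ac)
      also have "\<dots> = real (card {(a,b). a \<in> A' \<and> b \<in> B' \<and> (Q \<and> {a,b} \<in> E')})"
        by (rule sum_ind[OF fin A'sub B'sub])
      also have "\<dots> = (if Q then real (edge_count E' A' B') else 0)"
        unfolding edge_count_def by (cases Q) auto
      finally show ?thesis .
    qed
    have eta: "0 \<le> \<eta>" using reg[rule_format, of "{}" "{}"] by (simp add: edge_count_def)
    show ?thesis
      using reg[rule_format, OF A'sub B'sub] eta by (simp add: I1eq I2eq mult.assoc)
  qed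
  have "NN VH C (insert {x,y} T) S - d * NN VH C T S = (\<Sum>g\<in>?R. I1 g - d * I2 g)"
    by (simp add: N1 N2 sum_subtractf sum_distrib_left)
  also have "\<bar>\<dots>\<bar> \<le> (\<Sum>g\<in>?R. \<bar>I1 g - d * I2 g\<bar>)" by (rule sum_abs)
  also have "\<dots> \<le> (\<Sum>g\<in>?R. \<eta>)" by (intro sum_mono pt)
  also have "\<dots> = real (card ?R) * \<eta>" by simp
  finally show ?thesis .
qed


lemma ind_lemma:
  fixes NNf :: "'b set set \<Rightarrow> ('b set \<Rightarrow> 'a set set) \<Rightarrow> real"
  assumes "finite T" "T \<subseteq> W" "T0 \<union> T \<subseteq> F" "T0 \<inter> T = {}"
    and step: "\<forall>e\<in>W. \<forall>T'. T' \<subseteq> F \<longrightarrow> e \<notin> T' \<longrightarrow> \<bar>NNf (insert e T') S - d e * NNf T' S\<bar> \<le> \<eta>"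
    and d: "\<forall>e\<in>W. 0 \<le> d e \<and> d e \<le> 1"
  shows "\<bar>NNf (T0 \<union> T) S - (\<Prod>e\<in>T. d e) * NNf T0 S\<bar> \<le> real (card T) * \<eta>"
  using assms(1-4)
proof (induction T rule: finite_induct)
  case empty
  then show ?case by simp
next
  case (insert e T)
  have eEH: "e \<in> W" and TF: "insert e (T0 \<union> T) \<subseteq> F" using insert by auto
  have IH: "\<bar>NNf (T0 \<union> T) S - (\<Prod>e\<in>T. d e) * NNf T0 S\<bar> \<le> real (card T) * \<eta>"
    using insert by auto
  have enot: "e \<notin> T0 \<union> T" using insert by auto
  have st: "\<bar>NNf (insert e (T0 \<union> T)) S - d e * NNf (T0 \<union> T) S\<bar> \<le> \<eta>"
    using step eEH enot TF by blast
  have "\<bar>d e * NNf (T0 \<union> T) S - d e * ((\<Prod>e\<in>T. d e) * NNf T0 S)\<bar>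
      = d e * \<bar>NNf (T0 \<union> T) S - (\<Prod>e\<in>T. d e) * NNf T0 S\<bar>"
    using d eEH by (simp add: abs_mult right_diff_distrib[symmetric])
  also have "\<dots> \<le> 1 * (real (card T) * \<eta>)"
    using d eEH IH by (intro mult_mono) auto
  finally have A: "\<bar>d e * NNf (T0 \<union> T) S - d e * ((\<Prod>e\<in>T. d e) * NNf T0 S)\<bar> \<le> real (card T) * \<eta>" by simp
  have "T0 \<union> insert e T = insert e (T0 \<union> T)" by auto
  moreover have "(\<Prod>e\<in>insert e T. d e) = d e * (\<Prod>e\<in>T. d e)" using insert by simp
  ultimately show ?case using st A insert by (simp add: algebra_simps)
qed


lemma card_PiE_const:
  assumes "finite X" "\<forall>x\<in>X. card (C x) = n"
  shows "card (PiE X C) = n ^ card X"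
  using assms by (simp add: card_PiE)

lemma D_bound:
  assumes disj: "A \<inter> B = {}" and fin: "finite A" "finite B" "finite E'" "finite E"
    and cA: "card A = n" and cB: "card B = n"
    and cl: "delta_close \<delta> (bip_edges E A B) (bip_edges E' A B)" and dnn: "0 \<le> \<delta>"
  shows "real (card {(a,b). a \<in> A \<and> b \<in> B \<and> {a,b} \<in> E' - E}) \<le> \<delta> * density E' A B * real n ^ 2"
proof -
  let ?P = "{(a,b). a \<in> A \<and> b \<in> B \<and> {a,b} \<in> E' - E}"
  let ?f = "\<lambda>(a::'a,b). {a,b}"
  have finbip: "finite (bip_edges E' A B)" "finite (bip_edges E A B)" using fin(3,4) unfolding bip_edges_def by simp_all
  have inj: "inj_on ?f ?P"
  proof (rule inj_onI, clarsimp)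
    fix a b a' b'
    assume "a \<in> A" "b \<in> B" "a' \<in> A" "b' \<in> B" "{a,b} = {a',b'}"
    then show "a = a' \<and> b = b'" using disj by (auto simp: doubleton_eq_iff)
  qed
  have img: "?f ` ?P \<subseteq> bip_edges E' A B - bip_edges E A B"
  proof
    fix z assume "z \<in> ?f ` ?P"
    then obtain a b where ab: "a \<in> A" "b \<in> B" "{a,b} \<in> E'" "{a,b} \<notin> E" "z = {a,b}" by auto
    have "z \<notin> bip_edges E A B" using ab unfolding bip_edges_def by auto
    moreover have "z \<in> bip_edges E' A B" using ab unfolding bip_edges_def by auto
    ultimately show "z \<in> bip_edges E' A B - bip_edges E A B" by simp
  qed
  have "card ?P = card (?f ` ?P)" using card_image[OF inj] by simp
  also have "\<dots> \<le> card (bip_edges E' A B - bip_edges E A B)"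
    using img finbip by (intro card_mono) auto
  also have "\<dots> \<le> card ((bip_edges E A B - bip_edges E' A B) \<union> (bip_edges E' A B - bip_edges E A B))"
    using finbip by (intro card_mono) auto
  finally have c1: "real (card ?P) \<le> \<delta> * real (card (bip_edges E' A B))"
    using cl unfolding delta_close_def by (meson of_nat_le_iff order_trans)
  have bipeq: "bip_edges E' A B = ?f ` {(u, v). u \<in> A \<and> v \<in> B \<and> {u, v} \<in> E'}"
    unfolding bip_edges_def by auto
  have finpairs: "finite {(u, v). u \<in> A \<and> v \<in> B \<and> {u, v} \<in> E'}"
    by (rule finite_subset[of _ "A \<times> B"]) (use fin in auto)
  have "card (bip_edges E' A B) \<le> edge_count E' A B"
    unfolding bipeq edge_count_def by (rule card_image_le[OF finpairs])
  moreover have "real (edge_count E' A B) = density E' A B * real n ^ 2"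
  proof (cases "n = 0")
    case True
    then have "A = {}" using cA fin by auto
    then show ?thesis using True by (simp add: edge_count_def density_def)
  next
    case False
    then show ?thesis unfolding density_def using cA cB by (simp add: power2_eq_square)
  qed
  ultimately have "real (card (bip_edges E' A B)) \<le> density E' A B * real n ^ 2"
    by (metis of_nat_le_iff)
  then show ?thesis using c1 dnn
    by (smt (verit, ccfv_SIG) mult.assoc mult_left_mono)
qed


lemma NN_single:
  assumes xy: "x \<in> VH" "y \<in> VH" "x \<noteq> y" and fin: "finite (C x)" "finite (C y)"
  shows "NN VH C {{x,y}} S = real (card (PiE (VH-{x,y}) C)) * real (card {(a,b). a \<in> C x \<and> b \<in> C y \<and> {a,b} \<in> S {x,y}})"
proof -
  have xyimg: "(g(y:=b, x:=a)) ` {x,y} = {a,b}" for g a b using xy(3) by auto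
  have "NN VH C {{x,y}} S = (\<Sum>g\<in>PiE (VH-{x,y}) C. \<Sum>a\<in>C x. \<Sum>b\<in>C y.
      if (\<forall>e\<in>{{x,y}}. (g(y:=b, x:=a)) ` e \<in> S e) then 1 else 0)"
    unfolding NN_def by (rule sum_PiE_two[OF xy])
  also have "\<dots> = (\<Sum>g\<in>PiE (VH-{x,y}) C. \<Sum>a\<in>C x. \<Sum>b\<in>C y.
      if a \<in> C x \<and> b \<in> C y \<and> {a,b} \<in> S {x,y} then 1 else 0)"
    by (intro sum.cong refl) (simp only: ball_simps xyimg, simp)
  also have "\<dots> = (\<Sum>g\<in>PiE (VH-{x,y}) C. real (card {(a,b). a \<in> C x \<and> b \<in> C y \<and> {a,b} \<in> S {x,y}}))"
    by (intro sum.cong refl sum_ind fin) auto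
  finally show ?thesis by simp
qed

lemma Z_bound:
  assumes xy: "x \<in> VH" "y \<in> VH" "x \<noteq> y" and fin: "finite (C x)" "finite (C y)" and cx: "card (C x) = n"
  shows "(\<Sum>f\<in>PiE VH C. if f x = f y then 1 else 0::real) \<le> real (card (PiE (VH-{x,y}) C)) * real n"
proof -
  have "(\<Sum>f\<in>PiE VH C. if f x = f y then 1 else 0::real) = (\<Sum>g\<in>PiE (VH-{x,y}) C. \<Sum>a\<in>C x. \<Sum>b\<in>C y.
      if (g(y:=b, x:=a)) x = (g(y:=b, x:=a)) y then 1 else 0)"
    by (rule sum_PiE_two[OF xy])
  also have "\<dots> = (\<Sum>g\<in>PiE (VH-{x,y}) C. \<Sum>a\<in>C x. \<Sum>b\<in>C y. if a = b then 1 else 0)"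
    using xy(3) by simp
  also have "\<dots> \<le> (\<Sum>g\<in>PiE (VH-{x,y}) C. \<Sum>a\<in>C x. (1::real))"
  proof (intro sum_mono)
    fix g a
    show "(\<Sum>b\<in>C y. if a = b then 1 else 0::real) \<le> 1"
      using fin(2) by (simp add: sum.delta)
  qed
  also have "\<dots> = real (card (PiE (VH-{x,y}) C)) * real n" using cx by simp
  finally show ?thesis .
qed


lemma pointwise_ind:
  assumes "finite X" "finite Y" "A \<Longrightarrow> B \<or> (\<exists>e\<in>X. P e) \<or> (\<exists>q\<in>Y. Q q)"
  shows "(if A then 1 else 0::real) \<le> (if B then 1 else 0) + (\<Sum>e\<in>X. if P e then 1 else 0) + (\<Sum>q\<in>Y. if Q q then 1 else 0)"
proof -
  have s1: "0 \<le> (\<Sum>e\<in>X. if P e then 1 else 0::real)" "0 \<le> (\<Sum>q\<in>Y. if Q q then 1 else 0::real)"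
    by (auto intro: sum_nonneg)
  show ?thesis
  proof (cases A)
    case False then show ?thesis using s1 by simp
  next
    case True
    then consider B | "\<exists>e\<in>X. P e" | "\<exists>q\<in>Y. Q q" using assms(3) by blast
    then show ?thesis
    proof cases
      case 1 then show ?thesis using s1 by simp
    next
      case 2
      then obtain e where "e \<in> X" "P e" by blast
      then have "(if P e then 1 else 0::real) \<le> (\<Sum>e\<in>X. if P e then 1 else 0)"
        by (intro member_le_sum) (auto simp: assms(1))
      then show ?thesis using s1 \<open>P e\<close> True by simp
    next
      case 3
      then obtain q where "q \<in> Y" "Q q" by blast
      then have "(if Q q then 1 else 0::real) \<le> (\<Sum>q\<in>Y. if Q q then 1 else 0)"
        by (intro member_le_sum) (auto simp: assms(2))
      then show ?thesis using s1 \<open>Q q\<close> True by simp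
    qed
  qed
qed

lemma final_arith:
  fixes P p \<delta> \<epsilon> nr K :: real and m h :: nat
  assumes p: "0 < p" "p \<le> 1" and P: "p ^ m \<le> P" and dl: "0 \<le> \<delta>" "\<delta> \<le> 1 / (2 * real m)"
    and eps: "0 < \<epsilon>" "\<epsilon> \<le> (p ^ (m + 1) / (32 * real h ^ 4)) ^ 2"
    and nr: "nr \<ge> 4 * real h ^ (h + 3) / p ^ m" and h: "h \<ge> 1" and mh: "m \<le> h * h"
    and mh2: "m \<ge> 1 \<Longrightarrow> h \<ge> 2"
    and K: "K \<ge> P * nr ^ h - real m * (\<epsilon> * nr ^ h) - real m * (\<delta> * P * nr ^ h + real m * (\<epsilon> * nr ^ h)) - real (h * h) * nr ^ (h - 1)"
  shows "K \<ge> (1 - \<delta> * real m) / 2 * p ^ m * nr ^ h"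
proof -
  define q where "q = p ^ m"
  have q: "0 < q" "q \<le> 1" using p unfolding q_def by (auto simp: power_le_one)
  have nrq: "4 * real h ^ (h + 3) \<le> nr * q" using nr q unfolding q_def[symmetric] by (simp add: divide_le_eq)
  have nrpos: "nr > 0"
  proof -
    have "0 < 4 * real h ^ (h + 3)" using h by simp
    then have "0 < nr * q" using nrq by linarith
    then show ?thesis using q by (simp add: zero_less_mult_iff)
  qed
  define N where "N = nr ^ h"
  have Npos: "N > 0" unfolding N_def using nrpos by simp
  have Nsplit: "N = nr * nr ^ (h - 1)" unfolding N_def using h by (metis Suc_diff_le diff_Suc_1 power_Suc)
  define Y where "Y = real (h * h) * nr ^ (h - 1)"
  have Yb: "Y * (4 * real h ^ (h + 1)) \<le> q * N"
  proof -
    have "Y * (4 * real h ^ (h + 1)) = (4 * real h ^ (h + 3)) * nr ^ (h - 1)"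
      unfolding Y_def by (simp add: power_add algebra_simps power2_eq_square power3_eq_cube)
    also have "\<dots> \<le> (nr * q) * nr ^ (h - 1)"
      using nrq nrpos by (intro mult_right_mono) auto
    also have "\<dots> = q * N" using Nsplit by (simp add: algebra_simps)
    finally show ?thesis .
  qed
  have Ynn: "0 \<le> Y" unfolding Y_def using nrpos by simp
  have dm: "\<delta> * real m \<le> 1 / 2"
  proof (cases "m = 0")
    case True then show ?thesis by simp
  next
    case False
    then have "\<delta> * (2 * real m) \<le> 1" using dl by (simp add: le_divide_eq)
    then show ?thesis by simp
  qed
  have main: "K \<ge> (1 - \<delta> * real m) * P * N - (real m + real m * real m) * \<epsilon> * N - Y"
    using K unfolding N_def Y_def by (simp add: algebra_simps)
  have PN: "(1 - \<delta> * real m) * P * N \<ge> (1 - \<delta> * real m) * q * N"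
    using P dm Npos unfolding q_def by (intro mult_right_mono mult_left_mono) auto
  have rest: "(real m + real m * real m) * \<epsilon> * N + Y \<le> q * N / 4"
  proof (cases "m = 0")
    case True
    have "real h ^ (h + 1) \<ge> 1" using h by (intro one_le_power) simp
    then have "Y * 4 \<le> Y * (4 * real h ^ (h + 1))" using Ynn by (intro mult_left_mono) auto
    then show ?thesis using Yb True by simp
  next
    case False
    then have h2: "h \<ge> 2" using mh2 by simp
    have "real h ^ (h + 1) \<ge> 2 ^ 3"
    proof -
      have "(2::real) ^ 3 \<le> 2 ^ (h + 1)" using h2 by (intro power_increasing) auto
      also have "\<dots> \<le> real h ^ (h + 1)" using h2 by (intro power_mono) auto
      finally show ?thesis .
    qed
    then have "Y * 32 \<le> Y * (4 * real h ^ (h + 1))" using Ynn by (intro mult_left_mono) auto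
    then have Y32: "Y * 32 \<le> q * N" using Yb by linarith
    have hpos: "real h > 0" using h by simp
    have e1: "(p ^ (m + 1)) ^ 2 = p ^ m * p ^ (m + 2)"
    proof -
      have "(p ^ (m + 1)) ^ 2 = p ^ ((m + 1) * 2)" by (rule power_mult[symmetric])
      also have "(m + 1) * 2 = m + (m + 2)" by simp
      finally show ?thesis by (simp only: power_add)
    qed
    have e2: "(32 * real h ^ 4) ^ 2 = 1024 * real h ^ 8"
    proof -
      have "(32 * real h ^ 4) ^ 2 = 1024 * (real h ^ 4) ^ 2" by (simp add: power_mult_distrib)
      also have "(real h ^ 4) ^ 2 = real h ^ 8" by (simp flip: power_mult)
      finally show ?thesis .
    qed
    have "(p ^ (m + 1) / (32 * real h ^ 4)) ^ 2 = p ^ m * p ^ (m + 2) / (1024 * real h ^ 8)"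
      by (simp only: power_divide e1 e2)
    also have "\<dots> \<le> q / (1024 * real h ^ 8)"
    proof -
      have "p ^ (m + 2) \<le> 1" using p by (intro power_le_one) auto
      then have "p ^ m * p ^ (m + 2) \<le> p ^ m" using p by (intro mult_left_le) auto
      then show ?thesis unfolding q_def using hpos by (intro divide_right_mono) auto
    qed
    finally have epsq: "\<epsilon> \<le> q / (1024 * real h ^ 8)" using eps by linarith
    have mm: "real m + real m * real m \<le> 2 * real h ^ 4"
    proof -
      have "real m \<le> real h * real h" using mh by (metis of_nat_le_iff of_nat_mult)
      moreover have "real m * real m \<le> (real h * real h) * (real h * real h)"
        using \<open>real m \<le> real h * real h\<close> by (intro mult_mono) auto
      moreover have "real h * real h \<le> (real h * real h) * (real h * real h)"
      proof -
        have "1 \<le> real h * real h" using mult_mono[of 1 "real h" 1 "real h"] h by simp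
        then show ?thesis by (simp add: mult_le_cancel_left1)
      qed
      ultimately show ?thesis by (simp add: power4_eq_xxxx)
    qed
    have "(real m + real m * real m) * \<epsilon> \<le> (2 * real h ^ 4) * (q / (1024 * real h ^ 8))"
      using mm epsq eps by (intro mult_mono) auto
    also have "\<dots> = q / (512 * real h ^ 4)"
      using hpos by (simp add: field_simps power_add[symmetric] mult.assoc) 
    also have "\<dots> \<le> q / 512"
      using q hpos by (intro divide_left_mono) auto
    finally have "(real m + real m * real m) * \<epsilon> * N \<le> q / 512 * N" using Npos by (intro mult_right_mono) auto
    moreover have "q / 512 * N = (q * N) / 512" by simp
    moreover have "0 \<le> q * N" using q Npos by simp
    ultimately show ?thesis using Y32 by linarith
  qed
  have "(1 - \<delta> * real m) / 2 * q * N \<le> (1 - \<delta> * real m) * q * N - q * N / 4"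
  proof -
    have "1 / 2 \<le> 1 - \<delta> * real m" using dm by simp
    then have a: "1/2 * (q * N / 2) \<le> (1 - \<delta> * real m) * (q * N / 2)" using q Npos
      by (intro mult_right_mono) auto
    have b: "1/2 * (q * N / 2) = q * N / 4" by simp
    have c: "(1 - \<delta> * real m) * (q * N / 2) = ((1 - \<delta> * real m) * q * N) / 2" by simp
    have e: "(1 - \<delta> * real m) / 2 * q * N = ((1 - \<delta> * real m) * q * N) / 2" by simp
    show ?thesis using a b c e by linarith
  qed
  then show ?thesis using main PN rest unfolding q_def N_def by linarith
qed


theorem lemma4p1:
  fixes VH :: "'b set" and EH :: "'b set set"
    and V :: "'a set" and E' :: "'a set set" and E :: "'a set set"
    and U :: "nat \<Rightarrow> 'a set" and k n h m :: nat and \<epsilon> p \<delta> :: real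
  assumes H: "graph VH EH" and h: "h = card VH" and m: "m = card EH"
    and G': "eps_p_graph \<epsilon> p k U V E'"
    and sizes: "\<forall>i<k. card (U i) = n"
    and G: "graph V E"
    and close: "\<forall>i<k. \<forall>j<k. i \<noteq> j \<and> density E' (U i) (U j) > 0 \<longrightarrow>
                  delta_close \<delta> (bip_edges E (U i) (U j)) (bip_edges E' (U i) (U j))"
    and eps_pos: "0 < \<epsilon>" and p_pos: "0 < p" and p_le: "p \<le> 1" and delta_nn: "0 \<le> \<delta>"
    and delta_le: "\<delta> \<le> 1 / (2 * real m)"
    and eps_le: "\<epsilon> \<le> (p ^ (m + 1) / (32 * real h ^ 4)) ^ 2"
    and n_ge: "real n \<ge> 4 * real h ^ (h + 3) / p ^ m"
    and contains: "copies VH EH V E' \<noteq> {}"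
  shows "real (card (copies VH EH V E)) \<ge> (1 - \<delta> * real m) / 2 * p ^ m * real n ^ h"
proof -
  have finVH: "finite VH" and EHp: "\<forall>e\<in>EH. e \<subseteq> VH \<and> card e = 2" using H unfolding graph_def by auto
  have "EH \<subseteq> Pow VH" using EHp by blast
  then have finEH: "finite EH" using finVH by (simp add: finite_subset)
  have finV: "finite V" and E'p: "\<forall>e\<in>E'. e \<subseteq> V \<and> card e = 2" and Vu: "V = (\<Union>i<k. U i)"
    and disj: "\<forall>i<k. \<forall>j<k. i \<noteq> j \<longrightarrow> U i \<inter> U j = {}" and noin: "\<forall>e\<in>E'. \<forall>i<k. \<not> e \<subseteq> U i"
    and pairs: "\<forall>i<k. \<forall>j<k. i \<noteq> j \<longrightarrow> bip_edges E' (U i) (U j) = {} \<or> (eps_regular E' \<epsilon> (U i) (U j) \<and> p \<le> density E' (U i) (U j))"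
  proof -
    have kp: "k_partite k U V E'" using G' unfolding eps_p_graph_def by (rule conjunct1)
    show "\<forall>i<k. \<forall>j<k. i \<noteq> j \<longrightarrow> bip_edges E' (U i) (U j) = {} \<or> (eps_regular E' \<epsilon> (U i) (U j) \<and> p \<le> density E' (U i) (U j))"
      using G' unfolding eps_p_graph_def by (rule conjunct2)
    show "finite V" using kp unfolding k_partite_def graph_def by (rule conjunct1[OF conjunct1])
    show "\<forall>e\<in>E'. e \<subseteq> V \<and> card e = 2" using kp unfolding k_partite_def graph_def by (rule conjunct2[OF conjunct1])
    show "V = (\<Union>i<k. U i)" using kp unfolding k_partite_def by (rule conjunct1[OF conjunct2])
    show "\<forall>i<k. \<forall>j<k. i \<noteq> j \<longrightarrow> U i \<inter> U j = {}" using kp unfolding k_partite_def by (rule conjunct1[OF conjunct2[OF conjunct2]])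
    show "\<forall>e\<in>E'. \<forall>i<k. \<not> e \<subseteq> U i" using kp unfolding k_partite_def by (rule conjunct2[OF conjunct2[OF conjunct2]])
  qed
  have "E' \<subseteq> Pow V" using E'p by blast
  then have finE': "finite E'" using finV by (simp add: finite_subset)
  have "\<forall>e\<in>E. e \<subseteq> V \<and> card e = 2" using G unfolding graph_def by (rule conjunct2)
  then have "E \<subseteq> Pow V" by blast
  then have finE: "finite E" using finV by (simp add: finite_subset)
  obtain \<phi> where \<phi>: "\<phi> \<in> copies VH EH V E'" using contains by auto
  then have \<phi>V: "\<forall>x\<in>VH. \<phi> x \<in> V" and \<phi>E: "\<forall>e\<in>EH. \<phi> ` e \<in> E'" unfolding copies_def by auto
  define c where "c x = (SOME i. i < k \<and> \<phi> x \<in> U i)" for x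
  have c: "c x < k \<and> \<phi> x \<in> U (c x)" if "x \<in> VH" for x
  proof -
    have "\<exists>i. i < k \<and> \<phi> x \<in> U i" using \<phi>V that Vu by auto
    then show ?thesis unfolding c_def by (rule someI_ex)
  qed
  define C where "C x = U (c x)" for x
  have finC: "finite (C x)" if "x \<in> VH" for x
  proof -
    have "U (c x) \<subseteq> V" using c[OF that] Vu by blast
    then show ?thesis unfolding C_def using finV by (rule finite_subset)
  qed
  have cardC: "card (C x) = n" if "x \<in> VH" for x
    using c[OF that] sizes unfolding C_def by auto
  have h1: "h \<ge> 1"
  proof (rule ccontr)
    assume "\<not> h \<ge> 1"
    then have "h = 0" by simp
    then show False using eps_le eps_pos by simp
  qed
  have npos: "n > 0"
  proof -
    have "0 < 4 * real h ^ (h + 3) / p ^ m" using h1 p_pos by simp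
    then show ?thesis using n_ge by simp
  qed
  define pk where "pk e = (SOME pr. e = {fst pr, snd pr} \<and> fst pr \<noteq> snd pr)" for e :: "'b set"
  have pk: "e = {fst (pk e), snd (pk e)} \<and> fst (pk e) \<noteq> snd (pk e)" if "e \<in> EH" for e
  proof -
    have "card e = 2" using EHp that by blast
    then obtain x y where "e = {x,y}" "x \<noteq> y" unfolding card_2_iff by blast
    then have "\<exists>pr. e = {fst pr, snd pr} \<and> fst pr \<noteq> snd pr" by (intro exI[of _ "(x,y)"]) auto
    then show ?thesis unfolding pk_def by (rule someI_ex)
  qed
  define d where "d e = density E' (C (fst (pk e))) (C (snd (pk e)))" for e
  have edge: "x \<in> VH \<and> y \<in> VH \<and> C x \<inter> C y = {} \<and> eps_regular E' \<epsilon> (C x) (C y) \<and> p \<le> density E' (C x) (C y)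
      \<and> delta_close \<delta> (bip_edges E (C x) (C y)) (bip_edges E' (C x) (C y))"
    if "{x,y} \<in> EH" "x \<noteq> y" for x y
  proof -
    have xy: "x \<in> VH" "y \<in> VH" using EHp that by auto
    have ed: "{\<phi> x, \<phi> y} \<in> E'" using \<phi>E that by auto
    have cx: "c x < k" "\<phi> x \<in> U (c x)" "c y < k" "\<phi> y \<in> U (c y)" using c xy by auto
    have ne: "c x \<noteq> c y"
    proof
      assume "c x = c y"
      then have "{\<phi> x, \<phi> y} \<subseteq> U (c x)" using cx by auto
      then show False using noin ed cx by blast
    qed
    have "{\<phi> x, \<phi> y} \<in> bip_edges E' (U (c x)) (U (c y))"
      unfolding bip_edges_def using ed cx by auto
    then have rg: "eps_regular E' \<epsilon> (C x) (C y) \<and> p \<le> density E' (C x) (C y)"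
      using pairs[rule_format, OF cx(1) cx(3) ne] unfolding C_def by blast
    moreover have "delta_close \<delta> (bip_edges E (C x) (C y)) (bip_edges E' (C x) (C y))"
    proof -
      have "density E' (U (c x)) (U (c y)) > 0" using rg p_pos unfolding C_def by linarith
      then show ?thesis using close[rule_format, OF cx(1) cx(3) conjI[OF ne]] unfolding C_def by blast
    qed
    moreover have "C x \<inter> C y = {}" using disj cx ne unfolding C_def by blast
    ultimately show ?thesis using xy by blast
  qed
  have dprops: "p \<le> d e \<and> d e \<le> 1" if "e \<in> EH" for e
  proof -
    have "{fst (pk e), snd (pk e)} \<in> EH" "fst (pk e) \<noteq> snd (pk e)" using pk[OF that] that by auto
    from edge[OF this] have "p \<le> d e" "fst (pk e) \<in> VH" "snd (pk e) \<in> VH" unfolding d_def by auto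
    moreover have "d e \<le> 1" unfolding d_def using \<open>fst (pk e) \<in> VH\<close> \<open>snd (pk e) \<in> VH\<close>
      by (intro density_bounds(2) finC)
    ultimately show ?thesis by simp
  qed
  have cardR: "card (PiE (VH - {x,y}) C) = n ^ (h - 2)" if "x \<in> VH" "y \<in> VH" "x \<noteq> y" for x y
  proof -
    have "card (VH - {x,y}) = h - 2" using that finVH h by (simp add: card_Diff_subset)
    then show ?thesis using card_PiE_const[of "VH - {x,y}" C n] finVH cardC by auto
  qed
  have h2: "h \<ge> 2" if "x \<in> VH" "y \<in> VH" "x \<noteq> y" for x y
  proof -
    have "card {x,y} \<le> card VH" using that finVH by (intro card_mono) auto
    then show ?thesis using that h by simp
  qed
  have npow: "real n ^ (h - 2) * real n ^ 2 = real n ^ h" if "h \<ge> 2"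
  proof -
    have "h - 2 + 2 = h" using that by simp
    then show ?thesis by (metis power_add)
  qed
  have step: "\<bar>NN VH C (insert e T') S - d e * NN VH C T' S\<bar> \<le> \<epsilon> * real n ^ h"
    if "e \<in> EH" "T' \<subseteq> EH" "e \<notin> T'" "S e = E'" for e T' S
  proof -
    define x where "x = fst (pk e)"
    define y where "y = snd (pk e)"
    have exy: "e = {x,y}" "x \<noteq> y" using pk[OF that(1)] unfolding x_def y_def by auto
    have ed: "x \<in> VH \<and> y \<in> VH \<and> C x \<inter> C y = {} \<and> eps_regular E' \<epsilon> (C x) (C y) \<and> p \<le> density E' (C x) (C y)
      \<and> delta_close \<delta> (bip_edges E (C x) (C y)) (bip_edges E' (C x) (C y))"
      using edge[of x y] exy that(1) by blast
    have xy: "x \<in> VH" "y \<in> VH" using ed by auto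
    have reg: "\<forall>A'\<subseteq>C x. \<forall>B'\<subseteq>C y. \<bar>real (edge_count E' A' B') - d e * real (card A') * real (card B')\<bar> \<le> \<epsilon> * real n ^ 2"
    proof (intro allI impI)
      fix A' B' assume "A' \<subseteq> C x" "B' \<subseteq> C y"
      then show "\<bar>real (edge_count E' A' B') - d e * real (card A') * real (card B')\<bar> \<le> \<epsilon> * real n ^ 2"
        unfolding d_def x_def[symmetric] y_def[symmetric]
        using reg_bound[of E' \<epsilon> "C x" "C y" n A' B'] ed finC[OF xy(1)] finC[OF xy(2)] cardC[OF xy(1)] cardC[OF xy(2)] eps_pos
        by blast
    qed
    have T: "\<forall>e'\<in>T'. card e' = 2 \<and> e' \<noteq> {x,y}" using that(2,3) EHp exy by auto
    have "\<bar>NN VH C (insert {x,y} T') S - d e * NN VH C T' S\<bar> \<le> real (card (PiE (VH-{x,y}) C)) * (\<epsilon> * real n ^ 2)"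
      by (rule key[OF xy exy(2) finC[OF xy(1)] finC[OF xy(2)] T _ reg]) (use that exy in simp)
    also have "real (card (PiE (VH-{x,y}) C)) * (\<epsilon> * real n ^ 2) = \<epsilon> * real n ^ h"
      using cardR[OF xy exy(2)] npow[OF h2[OF xy exy(2)]] by (simp add: algebra_simps)
    finally show ?thesis using exy by simp
  qed
  define P where "P = (\<Prod>e\<in>EH. d e)"
  have cardPi: "card (PiE VH C) = n ^ h" using card_PiE_const[of VH C n] finVH cardC h by auto
  have finPi: "finite (PiE VH C)" using finVH finC by (intro finite_PiE) auto
  have NN0: "NN VH C {} S = real n ^ h" for S unfolding NN_def using cardPi by simp
  have dnn: "\<forall>e\<in>EH. 0 \<le> d e \<and> d e \<le> 1" using dprops p_pos by (meson less_le_trans less_imp_le)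
  define Mall where "Mall = NN VH C EH (\<lambda>_. E')"
  have Mall: "Mall \<ge> P * real n ^ h - real m * (\<epsilon> * real n ^ h)"
  proof -
    have "\<bar>NN VH C ({} \<union> EH) (\<lambda>_. E') - (\<Prod>e\<in>EH. d e) * NN VH C {} (\<lambda>_. E')\<bar> \<le> real (card EH) * (\<epsilon> * real n ^ h)"
      by (rule ind_lemma[where NNf="NN VH C" and W=EH and F=EH]) (use finEH step dnn in auto)
    then show ?thesis unfolding Mall_def P_def m NN0 by simp
  qed
  define S0 where "S0 e0 = (\<lambda>_. E')(e0 := E' - E)" for e0 :: "'b set"
  have Dterm: "NN VH C EH (S0 e0) \<le> \<delta> * P * real n ^ h + real m * (\<epsilon> * real n ^ h)" if e0: "e0 \<in> EH" for e0
  proof -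
    have ind: "\<bar>NN VH C ({e0} \<union> (EH - {e0})) (S0 e0) - (\<Prod>e\<in>EH - {e0}. d e) * NN VH C {e0} (S0 e0)\<bar>
        \<le> real (card (EH - {e0})) * (\<epsilon> * real n ^ h)"
      by (rule ind_lemma[where NNf="NN VH C" and W="EH - {e0}" and F=EH]) (use finEH step dnn e0 in \<open>auto simp: S0_def\<close>)
    define x where "x = fst (pk e0)"
    define y where "y = snd (pk e0)"
    have exy: "e0 = {x,y}" "x \<noteq> y" using pk[OF e0] unfolding x_def y_def by auto
    have ed: "x \<in> VH \<and> y \<in> VH \<and> C x \<inter> C y = {} \<and> eps_regular E' \<epsilon> (C x) (C y) \<and> p \<le> density E' (C x) (C y)
      \<and> delta_close \<delta> (bip_edges E (C x) (C y)) (bip_edges E' (C x) (C y))"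
      using edge[of x y] exy e0 by blast
    have xy: "x \<in> VH" "y \<in> VH" using ed by auto
    have "NN VH C {e0} (S0 e0) = real (card (PiE (VH-{x,y}) C)) * real (card {(a,b). a \<in> C x \<and> b \<in> C y \<and> {a,b} \<in> S0 e0 {x,y}})"
      unfolding exy(1) by (rule NN_single[OF xy exy(2) finC[OF xy(1)] finC[OF xy(2)]])
    also have "S0 e0 {x,y} = E' - E" unfolding S0_def exy(1) by simp
    also have "real (card {(a,b). a \<in> C x \<and> b \<in> C y \<and> {a,b} \<in> E' - E}) \<le> \<delta> * density E' (C x) (C y) * real n ^ 2"
      using D_bound[of "C x" "C y" E' E n \<delta>] ed finC[OF xy(1)] finC[OF xy(2)] finE' finE cardC[OF xy(1)] cardC[OF xy(2)] delta_nn
      by blast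
    finally have "NN VH C {e0} (S0 e0) \<le> real n ^ (h - 2) * (\<delta> * d e0 * real n ^ 2)"
      using cardR[OF xy exy(2)] unfolding d_def x_def[symmetric] y_def[symmetric]
      by (simp add: mult_left_mono)
    also have "\<dots> = \<delta> * d e0 * real n ^ h" using npow[OF h2[OF xy exy(2)]] by (simp add: algebra_simps)
    finally have single: "NN VH C {e0} (S0 e0) \<le> \<delta> * d e0 * real n ^ h" .
    have prnn: "0 \<le> (\<Prod>e\<in>EH - {e0}. d e)" using dnn by (intro prod_nonneg) auto
    have Peq: "P = d e0 * (\<Prod>e\<in>EH - {e0}. d e)" unfolding P_def using finEH e0 by (rule prod.remove)
    have un: "{e0} \<union> (EH - {e0}) = EH" using e0 by auto
    have cm: "real (card (EH - {e0})) * (\<epsilon> * real n ^ h) \<le> real m * (\<epsilon> * real n ^ h)"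
      using eps_pos m finEH by (intro mult_right_mono) (auto intro: card_mono)
    have "(\<Prod>e\<in>EH - {e0}. d e) * NN VH C {e0} (S0 e0) \<le> (\<Prod>e\<in>EH - {e0}. d e) * (\<delta> * d e0 * real n ^ h)"
      using single prnn by (rule mult_left_mono)
    also have "\<dots> = \<delta> * P * real n ^ h" using Peq by (simp add: algebra_simps)
    finally have X: "(\<Prod>e\<in>EH - {e0}. d e) * NN VH C {e0} (S0 e0) \<le> \<delta> * P * real n ^ h" .
    show ?thesis using X ind[unfolded un] cm by linarith
  qed
  define Prs where "Prs = {pr \<in> VH \<times> VH. fst pr \<noteq> snd pr}"
  have finPrs: "finite Prs" unfolding Prs_def using finVH by simp
  have cardPrs: "card Prs \<le> h * h"
  proof -
    have "card Prs \<le> card (VH \<times> VH)" unfolding Prs_def using finVH by (intro card_mono) auto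
    then show ?thesis using h by (simp add: card_cartesian_product)
  qed
  have Zb: "(\<Sum>f\<in>PiE VH C. if f (fst pr) = f (snd pr) then 1 else 0::real) \<le> real n ^ (h - 1)" if "pr \<in> Prs" for pr
  proof -
    have xy: "fst pr \<in> VH" "snd pr \<in> VH" "fst pr \<noteq> snd pr" using that unfolding Prs_def by auto
    have "(\<Sum>f\<in>PiE VH C. if f (fst pr) = f (snd pr) then 1 else 0::real) \<le> real (card (PiE (VH - {fst pr, snd pr}) C)) * real n"
      by (rule Z_bound[OF xy finC[OF xy(1)] finC[OF xy(2)] cardC[OF xy(1)]])
    also have "\<dots> = real n ^ (h - 2) * real n" using cardR[OF xy] by simp
    also have "\<dots> = real n ^ (h - 1)"
    proof -
      have "h - 2 + 1 = h - 1" using h2[OF xy] by simp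
      then show ?thesis by (metis power_add power_one_right)
    qed
    finally show ?thesis .
  qed
  define K where "K = (\<Sum>f\<in>PiE VH C. if inj_on f VH \<and> (\<forall>e\<in>EH. f ` e \<in> E) then 1 else 0::real)"
  have pw: "(if \<forall>e\<in>EH. f ` e \<in> E' then 1 else 0::real) \<le> (if inj_on f VH \<and> (\<forall>e\<in>EH. f ` e \<in> E) then 1 else 0)
      + (\<Sum>e0\<in>EH. if \<forall>e\<in>EH. f ` e \<in> S0 e0 e then 1 else 0) + (\<Sum>pr\<in>Prs. if f (fst pr) = f (snd pr) then 1 else 0)" for f
  proof (rule pointwise_ind[OF finEH finPrs])
    assume A: "\<forall>e\<in>EH. f ` e \<in> E'"
    show "(inj_on f VH \<and> (\<forall>e\<in>EH. f ` e \<in> E)) \<or> (\<exists>e0\<in>EH. \<forall>e\<in>EH. f ` e \<in> S0 e0 e) \<or> (\<exists>pr\<in>Prs. f (fst pr) = f (snd pr))"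
    proof (cases "inj_on f VH")
      case False
      then obtain x y where "x \<in> VH" "y \<in> VH" "x \<noteq> y" "f x = f y" unfolding inj_on_def by blast
      then have "(x,y) \<in> Prs" "f (fst (x,y)) = f (snd (x,y))" unfolding Prs_def by auto
      then show ?thesis by blast
    next
      case True
      show ?thesis
      proof (cases "\<forall>e\<in>EH. f ` e \<in> E")
        case True then show ?thesis using \<open>inj_on f VH\<close> by blast
      next
        case False
        then obtain e0 where "e0 \<in> EH" "f ` e0 \<notin> E" by blast
        then have "\<forall>e\<in>EH. f ` e \<in> S0 e0 e" using A unfolding S0_def by auto
        then show ?thesis using \<open>e0 \<in> EH\<close> by blast
      qed
    qed
  qed
  have "Mall \<le> (\<Sum>f\<in>PiE VH C. (if inj_on f VH \<and> (\<forall>e\<in>EH. f ` e \<in> E) then 1 else 0)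
      + (\<Sum>e0\<in>EH. if \<forall>e\<in>EH. f ` e \<in> S0 e0 e then 1 else 0) + (\<Sum>pr\<in>Prs. if f (fst pr) = f (snd pr) then 1 else 0))"
    unfolding Mall_def NN_def by (rule sum_mono) (rule pw)
  also have "\<dots> = K + (\<Sum>e0\<in>EH. NN VH C EH (S0 e0)) + (\<Sum>pr\<in>Prs. \<Sum>f\<in>PiE VH C. if f (fst pr) = f (snd pr) then 1 else 0)"
    unfolding K_def NN_def sum.distrib by (simp add: sum.swap[of _ "PiE VH C"])
  also have "(\<Sum>e0\<in>EH. NN VH C EH (S0 e0)) \<le> (\<Sum>e0\<in>EH. \<delta> * P * real n ^ h + real m * (\<epsilon> * real n ^ h))"
    by (rule sum_mono) (rule Dterm)
  also have "\<dots> = real m * (\<delta> * P * real n ^ h + real m * (\<epsilon> * real n ^ h))" using m by simp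
  also have "(\<Sum>pr\<in>Prs. \<Sum>f\<in>PiE VH C. if f (fst pr) = f (snd pr) then 1 else 0) \<le> (\<Sum>pr\<in>Prs. real n ^ (h - 1))"
    by (rule sum_mono) (rule Zb)
  also have "\<dots> \<le> real (h * h) * real n ^ (h - 1)"
  proof -
    have "real (card Prs) \<le> real (h * h)" using cardPrs by (simp only: of_nat_le_iff)
    then show ?thesis by (simp add: mult_right_mono)
  qed
  finally have Kb: "K \<ge> P * real n ^ h - real m * (\<epsilon> * real n ^ h) - real m * (\<delta> * P * real n ^ h + real m * (\<epsilon> * real n ^ h)) - real (h * h) * real n ^ (h - 1)"
    using Mall by linarith
  have Kc: "K \<le> real (card (copies VH EH V E))"
  proof -
    have "K = real (card (PiE VH C \<inter> {f. inj_on f VH \<and> (\<forall>e\<in>EH. f ` e \<in> E)}))"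
      unfolding K_def by (simp add: sum.If_cases[OF finPi])
    also have "card (PiE VH C \<inter> {f. inj_on f VH \<and> (\<forall>e\<in>EH. f ` e \<in> E)}) \<le> card (copies VH EH V E)"
    proof (rule card_mono)
      have "copies VH EH V E \<subseteq> PiE VH (\<lambda>_. V)" unfolding copies_def by auto
      then show "finite (copies VH EH V E)" using finVH finV by (meson finite_PiE finite_subset)
      have CV: "C x \<subseteq> V" if "x \<in> VH" for x using c[OF that] Vu unfolding C_def by blast
      show "PiE VH C \<inter> {f. inj_on f VH \<and> (\<forall>e\<in>EH. f ` e \<in> E)} \<subseteq> copies VH EH V E"
        unfolding copies_def using PiE_mono[of VH C "\<lambda>_. V"] CV by auto
    qed
    finally show ?thesis by simp
  qed
  have Pge: "p ^ m \<le> P" unfolding P_def m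
    using dprops p_pos by (intro prod_mono[where f="\<lambda>_. p", simplified prod_constant]) (auto simp: less_imp_le)
  have mh: "m \<le> h * h"
  proof -
    have "EH \<subseteq> (\<lambda>pr. {fst pr, snd pr}) ` (VH \<times> VH)"
    proof
      fix e assume "e \<in> EH"
      then have "e = {fst (pk e), snd (pk e)}" "fst (pk e) \<in> VH" "snd (pk e) \<in> VH" using pk EHp by blast+
      then show "e \<in> (\<lambda>pr. {fst pr, snd pr}) ` (VH \<times> VH)"
        by (intro image_eqI[of _ _ "pk e"]) (simp_all add: mem_Times_iff)
    qed
    then have "card EH \<le> card ((\<lambda>pr. {fst pr, snd pr}) ` (VH \<times> VH))" using finVH by (intro card_mono) auto
    also have "\<dots> \<le> card (VH \<times> VH)" using finVH by (intro card_image_le) auto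
    finally show ?thesis using m h by (simp add: card_cartesian_product)
  qed
  have mh2: "h \<ge> 2" if "m \<ge> 1"
  proof -
    have "EH \<noteq> {}" using that m by auto
    then obtain e where "e \<in> EH" by blast
    then show ?thesis using pk[of e] EHp h2 by blast
  qed
  have "K \<ge> (1 - \<delta> * real m) / 2 * p ^ m * real n ^ h"
    by (rule final_arith[OF p_pos p_le Pge delta_nn delta_le eps_pos eps_le n_ge h1 mh mh2 Kb])
  then show ?thesis using Kc by linarith
qed

end
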